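(* For every stream covering $\rho:E\to B$, the induced functors $\mathrm{T}_1(\rho):\mathrm{T}_1E\to\mathrm{T}_1B$ and $\mathrm{T}_1(\rho)^{op}:(\mathrm{T}_1E)^{op}\to(\mathrm{T}_1B)^{op}$ are op-fibrations of small categories.
   Context: Streams: a circulation on a space $X$ assigns to each open $V\subset X$ a preorder $\leqslant_V$ such that for every collection $\mathcal{O}$ of open sets, $\leqslant_{\bigcup\mathcal{O}}$ is the preorder with smallest graph containing $\bigcup_{V\in\mathcal{O}}\mathrm{graph}(\leqslant_V)$; a stream is a space with a circulation; a stream map $f:X\to Y$ is continuous with $f(x)\leqslant_V f(y)$ whenever $x\leqslant_{f^{-1}V}y$. An open substream of $X$ is an open $V$ with circulation $W\mapsto\leqslant_W$. A stream covering is a surjective stream map $\rho:E\to B$ such that $B$ is covered by open substreams whose preimages are disjoint unions of open substreams each mapped by $\rho$ isomorphically (as streams) onto the corresponding open substream. $\vec\square[1]$ is $[0,1]$ with circulation $x\leqslant_V y$ iff $x\le y$ and $[x,y]\subset V$; a dipath is a stream map from $\vec\square[1]$. The fundamental category $\mathrm{T}_1X$ has the points of $X$ as objects and, as morphisms $x\to y$, classes of dipaths $x\leadsto y$ modulo homotopy relative $\{0,1\}$ through dipaths, composed by concatenation; $\mathrm{T}_1$ is functorial in stream maps. A functor $F:\mathcal{C}\to\mathcal{D}$ is an op-fibration if for each object $c$ of $\mathcal{C}$, every morphism of $\mathcal{D}$ with source $F(c)$ lifts uniquely along $F$ to a morphism of $\mathcal{C}$ with source $c$. *)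

theory Defs
  imports "HOL-Analysis.Analysis"
begin

(* A circulation C on a space X: to each open V it assigns the relation C V,
   written x \<le>_V y as C V x y. *)

definition circ_rel :: "('a set \<Rightarrow> 'a \<Rightarrow> 'a \<Rightarrow> bool) \<Rightarrow> 'a set \<Rightarrow> ('a \<times> 'a) set" where
  "circ_rel C V = {(x, y). C V x y}"

definition is_preorder_on :: "'a set \<Rightarrow> ('a \<times> 'a) set \<Rightarrow> bool" where
  "is_preorder_on A R \<longleftrightarrow> R \<subseteq> A \<times> A \<and> (\<forall>x\<in>A. (x, x) \<in> R) \<and> trans R"

definition smallest_preorder_containing :: "'a set \<Rightarrow> ('a \<times> 'a) set \<Rightarrow> ('a \<times> 'a) set \<Rightarrow> bool" where
  "smallest_preorder_containing A G R \<longleftrightarrow>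
     is_preorder_on A R \<and> G \<subseteq> R \<and> (\<forall>R'. is_preorder_on A R' \<and> G \<subseteq> R' \<longrightarrow> R \<subseteq> R')"

definition circulation :: "'a topology \<Rightarrow> ('a set \<Rightarrow> 'a \<Rightarrow> 'a \<Rightarrow> bool) \<Rightarrow> bool" where
  "circulation X C \<longleftrightarrow>
     (\<forall>V. openin X V \<longrightarrow> is_preorder_on V (circ_rel C V)) \<and>
     (\<forall>\<O>. (\<forall>V\<in>\<O>. openin X V) \<longrightarrow>
        smallest_preorder_containing (\<Union>\<O>) (\<Union>V\<in>\<O>. circ_rel C V) (circ_rel C (\<Union>\<O>)))"

(* a stream is a pair (X, C) with circulation X C *)

definition stream_map ::
  "'a topology \<Rightarrow> ('a set \<Rightarrow> 'a \<Rightarrow> 'a \<Rightarrow> bool) \<Rightarrow>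
   'b topology \<Rightarrow> ('b set \<Rightarrow> 'b \<Rightarrow> 'b \<Rightarrow> bool) \<Rightarrow> ('a \<Rightarrow> 'b) \<Rightarrow> bool" where
  "stream_map X C Y D f \<longleftrightarrow> continuous_map X Y f \<and>
     (\<forall>V. openin Y V \<longrightarrow>
        (\<forall>x y. C {z \<in> topspace X. f z \<in> V} x y \<longrightarrow> D V (f x) (f y)))"

definition stream_iso ::
  "'a topology \<Rightarrow> ('a set \<Rightarrow> 'a \<Rightarrow> 'a \<Rightarrow> bool) \<Rightarrow>
   'b topology \<Rightarrow> ('b set \<Rightarrow> 'b \<Rightarrow> 'b \<Rightarrow> bool) \<Rightarrow> ('a \<Rightarrow> 'b) \<Rightarrow> bool" where
  "stream_iso X C Y D f \<longleftrightarrow> stream_map X C Y D f \<and>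
     (\<exists>g. stream_map Y D X C g \<and> (\<forall>x\<in>topspace X. g (f x) = x) \<and> (\<forall>y\<in>topspace Y. f (g y) = y))"

(* The open substream of (X, C) on an open U is (subtopology X U, C):
   its open sets are the open sets of X contained in U, with the same preorders. *)

definition stream_covering ::
  "'e topology \<Rightarrow> ('e set \<Rightarrow> 'e \<Rightarrow> 'e \<Rightarrow> bool) \<Rightarrow>
   'b topology \<Rightarrow> ('b set \<Rightarrow> 'b \<Rightarrow> 'b \<Rightarrow> bool) \<Rightarrow> ('e \<Rightarrow> 'b) \<Rightarrow> bool" where
  "stream_covering E C B D \<rho> \<longleftrightarrow>
     stream_map E C B D \<rho> \<and> \<rho> ` topspace E = topspace B \<and>
     (\<forall>b\<in>topspace B. \<exists>V. openin B V \<and> b \<in> V \<and>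
        (\<exists>\<U>. (\<forall>U\<in>\<U>. openin E U) \<and> pairwise disjnt \<U> \<and>
              \<Union>\<U> = {e \<in> topspace E. \<rho> e \<in> V} \<and>
              (\<forall>U\<in>\<U>. stream_iso (subtopology E U) C (subtopology B V) D \<rho>)))"

definition I01 :: "real topology" where
  "I01 = top_of_set {0..1}"

definition circ_I :: "real set \<Rightarrow> real \<Rightarrow> real \<Rightarrow> bool" where
  "circ_I V x y \<longleftrightarrow> x \<le> y \<and> {x..y} \<subseteq> V"

definition dipath :: "'a topology \<Rightarrow> ('a set \<Rightarrow> 'a \<Rightarrow> 'a \<Rightarrow> bool) \<Rightarrow> (real \<Rightarrow> 'a) \<Rightarrow> bool" where
  "dipath X C \<gamma> \<longleftrightarrow> stream_map I01 circ_I X C \<gamma>"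

definition dihomotopic ::
  "'a topology \<Rightarrow> ('a set \<Rightarrow> 'a \<Rightarrow> 'a \<Rightarrow> bool) \<Rightarrow> 'a \<Rightarrow> 'a \<Rightarrow> (real \<Rightarrow> 'a) \<Rightarrow> (real \<Rightarrow> 'a) \<Rightarrow> bool" where
  "dihomotopic X C x y \<gamma> \<delta> \<longleftrightarrow>
     homotopic_with (\<lambda>h. dipath X C h \<and> h 0 = x \<and> h 1 = y) I01 X \<gamma> \<delta>"

(* Fundamental category T_1 X: objects = topspace X;
   morphisms x \<rightarrow> y = homotopy classes of dipaths from x to y *)
definition T1_hom :: "'a topology \<Rightarrow> ('a set \<Rightarrow> 'a \<Rightarrow> 'a \<Rightarrow> bool) \<Rightarrow> 'a \<Rightarrow> 'a \<Rightarrow> (real \<Rightarrow> 'a) set set" where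
  "T1_hom X C x y =
     {{\<delta>. dihomotopic X C x y \<gamma> \<delta>} | \<gamma>. dipath X C \<gamma> \<and> \<gamma> 0 = x \<and> \<gamma> 1 = y}"

definition T1_map ::
  "'b topology \<Rightarrow> ('b set \<Rightarrow> 'b \<Rightarrow> 'b \<Rightarrow> bool) \<Rightarrow> ('a \<Rightarrow> 'b) \<Rightarrow> 'a \<Rightarrow> 'a \<Rightarrow> (real \<Rightarrow> 'a) set \<Rightarrow> (real \<Rightarrow> 'b) set" where
  "T1_map Y D f x y c = {\<delta>. \<exists>\<gamma>\<in>c. dihomotopic Y D (f x) (f y) (f \<circ> \<gamma>) \<delta>}"

(* A functor given by an object map Fo and morphism maps Fm x y : Hom1 x y \<rightarrow> Hom2 (Fo x) (Fo y). *)
definition op_fibration ::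
  "'o1 set \<Rightarrow> ('o1 \<Rightarrow> 'o1 \<Rightarrow> 'm1 set) \<Rightarrow> 'o2 set \<Rightarrow> ('o2 \<Rightarrow> 'o2 \<Rightarrow> 'm2 set) \<Rightarrow>
   ('o1 \<Rightarrow> 'o2) \<Rightarrow> ('o1 \<Rightarrow> 'o1 \<Rightarrow> 'm1 \<Rightarrow> 'm2) \<Rightarrow> bool" where
  "op_fibration Obj1 Hom1 Obj2 Hom2 Fo Fm \<longleftrightarrow>
     (\<forall>c\<in>Obj1. \<forall>d\<in>Obj2. \<forall>g\<in>Hom2 (Fo c) d.
        \<exists>!p. fst p \<in> Obj1 \<and> snd p \<in> Hom1 c (fst p) \<and> Fo (fst p) = d \<and> Fm c (fst p) (snd p) = g)"

definition op_hom :: "('o \<Rightarrow> 'o \<Rightarrow> 'm set) \<Rightarrow> 'o \<Rightarrow> 'o \<Rightarrow> 'm set" where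
  "op_hom H x y = H y x"

definition op_fmap :: "('o \<Rightarrow> 'o \<Rightarrow> 'm \<Rightarrow> 'n) \<Rightarrow> 'o \<Rightarrow> 'o \<Rightarrow> 'm \<Rightarrow> 'n" where
  "op_fmap F x y f = F y x f"

end

theory Submission
  imports Defs
begin

lemma interval_lg:
  fixes R :: "real \<Rightarrow> real \<Rightarrow> bool" and x y :: real
  assumes xy: "x \<le> y"
    and tr: "\<And>a b c. x \<le> a \<Longrightarrow> a \<le> b \<Longrightarrow> b \<le> c \<Longrightarrow> c \<le> y \<Longrightarrow> R a b \<Longrightarrow> R b c \<Longrightarrow> R a c"
    and loc: "\<And>z. z \<in> {x..y} \<Longrightarrow> \<exists>e>0. \<forall>a b. x \<le> a \<and> a \<le> b \<and> b \<le> y \<and> z - e < a \<and> b < z + e \<longrightarrow> R a b"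
  shows "R x y"
proof -
  obtain ee where ee: "\<And>z. z \<in> {x..y} \<Longrightarrow> ee z > 0 \<and> (\<forall>a b. x \<le> a \<and> a \<le> b \<and> b \<le> y \<and> z - ee z < a \<and> b < z + ee z \<longrightarrow> R a b)"
    using loc by metis
  obtain \<delta> where d0: "0 < \<delta>" and dl: "\<And>T. \<lbrakk>T \<subseteq> {x..y}; diameter T < \<delta>\<rbrakk> \<Longrightarrow> \<exists>B \<in> (\<lambda>z. ball z (ee z)) ` {x..y}. T \<subseteq> B"
  proof (rule Lebesgue_number_lemma [of "{x..y}" "(\<lambda>z. ball z (ee z)) ` {x..y}"])
    show "{x..y} \<subseteq> \<Union> ((\<lambda>z. ball z (ee z)) ` {x..y})"
      using ee by force
  qed (use xy in auto)
  obtain N :: nat where N: "N > (y - x) / \<delta>" using reals_Archimedean2 by blast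
  have "0 \<le> (y - x) / \<delta>" using xy d0 by simp
  with N have "real N > 0" by linarith
  then have Npos: "N > 0" by simp
  define p where "p k = x + real k * (y - x) / N" for k
  have step: "R (p k) (p (Suc k))" if "k < N" for k
  proof -
    have le: "p k \<le> p (Suc k)" using xy Npos by (simp add: p_def divide_right_mono mult_right_mono)
    have "p k \<ge> x" using xy by (simp add: p_def)
    have "p (Suc k) \<le> y"
    proof -
      have "real (Suc k) * (y - x) / N \<le> real N * (y - x) / N"
        using that xy Npos by (intro divide_right_mono mult_right_mono) auto
      then show ?thesis using Npos by (simp add: p_def)
    qed
    have diam: "diameter {p k .. p (Suc k)} < \<delta>"
    proof -
      have "diameter {p k .. p (Suc k)} = p (Suc k) - p k" using le by simp
      also have "\<dots> = (y - x) / N" using Npos by (simp add: p_def field_simps)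
      also have "\<dots> < \<delta>" using N d0 Npos by (simp add: divide_less_eq mult.commute)
      finally show ?thesis .
    qed
    obtain z where z: "z \<in> {x..y}" and sub: "{p k .. p (Suc k)} \<subseteq> ball z (ee z)"
      using dl[OF _ diam] \<open>p k \<ge> x\<close> \<open>p (Suc k) \<le> y\<close> by force
    have "p k \<in> ball z (ee z)" "p (Suc k) \<in> ball z (ee z)" using sub le by auto
    then have "z - ee z < p k" "p (Suc k) < z + ee z" by (auto simp: dist_real_def)
    then show ?thesis using ee[OF z] le \<open>p k \<ge> x\<close> \<open>p (Suc k) \<le> y\<close> by blast
  qed
  have bnd: "x \<le> p k \<and> p k \<le> y" if "k \<le> N" for k
  proof -
    have "real k * (y - x) / N \<le> real N * (y - x) / N"
      using that xy Npos by (intro divide_right_mono mult_right_mono) auto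
    then show ?thesis using Npos xy by (simp add: p_def)
  qed
  have base: "R x x"
    using ee[of x] xy by force
  have "R x (p k)" if "k \<le> N" for k
    using that
  proof (induction k)
    case 0 then show ?case using base by (simp add: p_def)
  next
    case (Suc k)
    then have "R x (p k)" by simp
    moreover have "R (p k) (p (Suc k))" using step Suc by simp
    moreover have "p k \<le> p (Suc k)" using xy Npos by (simp add: p_def divide_right_mono mult_right_mono)
    ultimately show ?case using tr[of x "p k" "p (Suc k)"] bnd Suc xy by auto
  qed
  then have "R x (p N)" by simp
  moreover have "p N = y" using Npos by (simp add: p_def)
  ultimately show ?thesis by simp
qed


lemma topspace_I01 [simp]: "topspace I01 = {0..1}"
  by (simp add: I01_def)

lemma sm_compose:
  assumes f: "stream_map X C Y D f" and g: "stream_map Y D Z F g"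
  shows "stream_map X C Z F (g \<circ> f)"
  unfolding stream_map_def
proof (intro conjI allI impI)
  have fc: "continuous_map X Y f" and gc: "continuous_map Y Z g"
    using f g by (auto simp: stream_map_def)
  then show "continuous_map X Z (g \<circ> f)" by (rule continuous_map_compose)
  fix W x y
  assume W: "openin Z W" and Cxy: "C {z \<in> topspace X. (g \<circ> f) z \<in> W} x y"
  define V where "V = {y \<in> topspace Y. g y \<in> W}"
  have V: "openin Y V" unfolding V_def using gc W by (rule openin_continuous_map_preimage)
  have "{z \<in> topspace X. (g \<circ> f) z \<in> W} = {z \<in> topspace X. f z \<in> V}"
    using continuous_map_image_subset_topspace[OF fc] by (auto simp: V_def)
  then have "D V (f x) (f y)" using f V Cxy by (auto simp: stream_map_def)
  then show "F W ((g \<circ> f) x) ((g \<circ> f) y)"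
    using g W by (auto simp: stream_map_def V_def)
qed

lemma dipath_cong:
  assumes "dipath X C \<gamma>" and eq: "\<And>t. t \<in> {0..1} \<Longrightarrow> \<gamma> t = \<delta> t"
  shows "dipath X C \<delta>"
  unfolding dipath_def stream_map_def
proof (intro conjI allI impI)
  have "continuous_map I01 X \<gamma>" using assms(1) unfolding dipath_def stream_map_def by blast
  then show "continuous_map I01 X \<delta>"
    by (rule continuous_map_eq) (simp add: eq)
  fix V x y
  assume V: "openin X V" and c: "circ_I {z \<in> topspace I01. \<delta> z \<in> V} x y"
  have seq: "{z \<in> topspace I01. \<delta> z \<in> V} = {z \<in> topspace I01. \<gamma> z \<in> V}"
    using eq by auto
  have xle: "x \<le> y" and sub: "{x..y} \<subseteq> {z \<in> topspace I01. \<delta> z \<in> V}"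
    using c unfolding circ_I_def by blast+
  have "x \<in> {x..y}" "y \<in> {x..y}" using xle by auto
  then have xy: "x \<in> {0..1}" "y \<in> {0..1}" using sub by auto
  have c': "circ_I {z \<in> topspace I01. \<gamma> z \<in> V} x y" using c seq by simp
  have "C V (\<gamma> x) (\<gamma> y)" using assms(1) V c' unfolding dipath_def stream_map_def by blast
  then show "C V (\<delta> x) (\<delta> y)" using eq[OF xy(1)] eq[OF xy(2)] by simp
qed

definition evenly where
  "evenly E C B D \<rho> V \<longleftrightarrow> openin B V \<and>
     (\<exists>\<U>. (\<forall>U\<in>\<U>. openin E U) \<and> pairwise disjnt \<U> \<and>
              \<Union>\<U> = {e \<in> topspace E. \<rho> e \<in> V} \<and>
              (\<forall>U\<in>\<U>. stream_iso (subtopology E U) C (subtopology B V) D \<rho>))"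

lemma cov_evenly:
  assumes "stream_covering E C B D \<rho>" "b \<in> topspace B"
  obtains V where "b \<in> V" "evenly E C B D \<rho> V"
proof -
  have "\<exists>V. b \<in> V \<and> evenly E C B D \<rho> V"
    using assms unfolding stream_covering_def evenly_def
    apply (elim conjE)
    apply (drule bspec, assumption)
    apply (elim exE conjE)
    by blast
  then show ?thesis using that by blast
qed

lemma evenly_sheet:
  assumes ev: "evenly E C B D \<rho> V" and e: "e \<in> topspace E" "\<rho> e \<in> V"
  obtains U g where "openin E U" "e \<in> U" "\<And>x. x \<in> U \<Longrightarrow> \<rho> x \<in> V"
    "stream_map (subtopology B V) D (subtopology E U) C g"
    "\<And>x. x \<in> U \<Longrightarrow> g (\<rho> x) = x" "\<And>y. y \<in> V \<Longrightarrow> \<rho> (g y) = y"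
proof -
  have oV: "openin B V" using ev unfolding evenly_def by (elim conjE)
  obtain \<U> where oU: "\<forall>U\<in>\<U>. openin E U" and un: "\<Union>\<U> = {e \<in> topspace E. \<rho> e \<in> V}"
    and iso: "\<forall>U\<in>\<U>. stream_iso (subtopology E U) C (subtopology B V) D \<rho>"
    using ev unfolding evenly_def apply (elim conjE exE) by (rule that)
  have "e \<in> \<Union>\<U>" using un e by simp
  then obtain U where U: "U \<in> \<U>" "e \<in> U" by blast
  have "stream_iso (subtopology E U) C (subtopology B V) D \<rho>" using iso U by blast
  then obtain g where g: "stream_map (subtopology B V) D (subtopology E U) C g"
    "\<forall>x\<in>topspace (subtopology E U). g (\<rho> x) = x" "\<forall>y\<in>topspace (subtopology B V). \<rho> (g y) = y"
    unfolding stream_iso_def by (elim conjE exE) (rule that)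
  have Ut: "U \<subseteq> topspace E" using oU U openin_subset by blast
  have Vt: "V \<subseteq> topspace B" using oV openin_subset by blast
  show ?thesis
  proof
    show "openin E U" using oU U by blast
    show "e \<in> U" by (rule U)
    show "\<rho> x \<in> V" if "x \<in> U" for x
    proof -
      have "x \<in> \<Union>\<U>" using that U by blast
      then show ?thesis using un by simp
    qed
    show "stream_map (subtopology B V) D (subtopology E U) C g" by (rule g)
    show "g (\<rho> x) = x" if "x \<in> U" for x
    proof -
      have "x \<in> topspace (subtopology E U)" using that Ut by auto
      then show ?thesis using g(2) by blast
    qed
    show "\<rho> (g y) = y" if "y \<in> V" for y
    proof -
      have "y \<in> topspace (subtopology B V)" using that Vt by auto
      then show ?thesis using g(3) by blast
    qed
  qed
qed

lemma sheet_pair: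
  assumes cov: "stream_covering E C B D \<rho>" and e: "e1 \<in> topspace E" "e2 \<in> topspace E"
    and eq: "\<rho> e1 = \<rho> e2"
  obtains U1 U2 where "openin E U1" "openin E U2" "e1 \<in> U1" "e2 \<in> U2"
    "\<And>x y. x \<in> U1 \<Longrightarrow> y \<in> U2 \<Longrightarrow> \<rho> x = \<rho> y \<Longrightarrow> (x = y \<longleftrightarrow> e1 = e2)"
proof -
  have rc: "continuous_map E B \<rho>" using cov unfolding stream_covering_def stream_map_def
    apply (elim conjE) by assumption
  have b: "\<rho> e1 \<in> topspace B" using continuous_map_image_subset_topspace[OF rc] e by blast
  obtain V \<U> where oU: "\<forall>U\<in>\<U>. openin E U" and dj: "pairwise disjnt \<U>"
    and un: "\<Union>\<U> = {e \<in> topspace E. \<rho> e \<in> V}"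
    and iso: "\<forall>U\<in>\<U>. stream_iso (subtopology E U) C (subtopology B V) D \<rho>"
    and bV: "\<rho> e1 \<in> V"
    using cov b unfolding stream_covering_def
    apply (elim conjE)
    apply (drule (1) bspec)
    apply (elim exE conjE)
    apply (rule that)
    apply assumption+
    done
  have "e1 \<in> \<Union>\<U>" using un e bV by blast
  then obtain U1 where U1: "U1 \<in> \<U>" "e1 \<in> U1" by blast
  have "e2 \<in> \<Union>\<U>" using un e bV eq by simp
  then obtain U2 where U2: "U2 \<in> \<U>" "e2 \<in> U2" by blast
  have inj: "x = y" if U: "U \<in> \<U>" and xy: "x \<in> U" "y \<in> U" "\<rho> x = \<rho> y" for U x y
  proof -
    obtain g where g: "\<forall>x\<in>topspace (subtopology E U). g (\<rho> x) = x"
      using iso U unfolding stream_iso_def by blast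
    have "U \<subseteq> topspace E" using oU U openin_subset by blast
    then have "x \<in> topspace (subtopology E U)" "y \<in> topspace (subtopology E U)" using xy by auto
    then have "x = g (\<rho> x)" "y = g (\<rho> y)" using g by auto
    then show "x = y" using xy by simp
  qed
  show ?thesis
  proof
    show "openin E U1" "openin E U2" using oU U1 U2 by auto
    show "e1 \<in> U1" "e2 \<in> U2" using U1 U2 by auto
    fix x y assume xy: "x \<in> U1" "y \<in> U2" "\<rho> x = \<rho> y"
    show "x = y \<longleftrightarrow> e1 = e2"
    proof (cases "U1 = U2")
      case True
      have "x = y" using inj[OF U1(1)] xy True by blast
      moreover have "e1 = e2" using inj[OF U1(1)] U1 U2 True eq by blast
      ultimately show ?thesis by simp
    next
      case False
      then have "disjnt U1 U2" using dj U1 U2 by (meson pairwiseD)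
      then have "x \<noteq> y" "e1 \<noteq> e2" using xy U1 U2 unfolding disjnt_def by blast+
      then show ?thesis by simp
    qed
  qed
qed

lemma lift_unique:
  assumes cov: "stream_covering E C B D \<rho>"
    and ka: "continuous_map Z E ka" and kb: "continuous_map Z E kb"
    and eq: "\<And>z. z \<in> topspace Z \<Longrightarrow> \<rho> (ka z) = \<rho> (kb z)"
    and con: "connected_space Z" and z0: "z0 \<in> topspace Z" "ka z0 = kb z0"
    and z: "z \<in> topspace Z"
  shows "ka z = kb z"
proof -
  define A where "A = {z \<in> topspace Z. ka z = kb z}"
  have key: "\<exists>T. openin Z T \<and> w \<in> T \<and> (\<forall>w'\<in>T. ka w' = kb w' \<longleftrightarrow> ka w = kb w)"
    if w: "w \<in> topspace Z" for w
  proof -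
    have e: "ka w \<in> topspace E" "kb w \<in> topspace E"
      using continuous_map_image_subset_topspace[OF ka] continuous_map_image_subset_topspace[OF kb] w
      by blast+
    obtain U1 U2 where o: "openin E U1" "openin E U2" and m: "ka w \<in> U1" "kb w \<in> U2"
      and pr: "\<And>x y. x \<in> U1 \<Longrightarrow> y \<in> U2 \<Longrightarrow> \<rho> x = \<rho> y \<Longrightarrow> (x = y \<longleftrightarrow> ka w = kb w)"
      using sheet_pair[OF cov e eq[OF w]] by blast
    define T where "T = {z \<in> topspace Z. ka z \<in> U1} \<inter> {z \<in> topspace Z. kb z \<in> U2}"
    have "openin Z T" unfolding T_def
      using openin_continuous_map_preimage[OF ka o(1)] openin_continuous_map_preimage[OF kb o(2)]
      by (rule openin_Int)
    moreover have "w \<in> T" using w m by (simp add: T_def)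
    moreover have "ka w' = kb w' \<longleftrightarrow> ka w = kb w" if "w' \<in> T" for w'
    proof -
      have "w' \<in> topspace Z" "ka w' \<in> U1" "kb w' \<in> U2" using that by (auto simp: T_def)
      then show ?thesis using pr eq by blast
    qed
    ultimately show ?thesis by blast
  qed
  have oA: "openin Z A"
  proof (subst openin_subopen, intro ballI)
    fix w assume "w \<in> A"
    then have w: "w \<in> topspace Z" "ka w = kb w" by (auto simp: A_def)
    then obtain T where T: "openin Z T" "w \<in> T" "\<forall>w'\<in>T. ka w' = kb w' \<longleftrightarrow> ka w = kb w"
      using key by blast
    have "T \<subseteq> A" using T w openin_subset[OF T(1)] by (auto simp: A_def)
    then show "\<exists>T. openin Z T \<and> w \<in> T \<and> T \<subseteq> A" using T by blast
  qed
  have oB: "openin Z (topspace Z - A)"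
  proof (subst openin_subopen, intro ballI)
    fix w assume "w \<in> topspace Z - A"
    then have w: "w \<in> topspace Z" "ka w \<noteq> kb w" by (auto simp: A_def)
    then obtain T where T: "openin Z T" "w \<in> T" "\<forall>w'\<in>T. ka w' = kb w' \<longleftrightarrow> ka w = kb w"
      using key by blast
    have "T \<subseteq> topspace Z - A" using T w openin_subset[OF T(1)] by (auto simp: A_def)
    then show "\<exists>T. openin Z T \<and> w \<in> T \<and> T \<subseteq> topspace Z - A" using T by blast
  qed
  have "A \<subseteq> topspace Z" by (auto simp: A_def)
  then have "closedin Z A" using oB closedin_def by blast
  then have "A = {} \<or> A = topspace Z" using con oA connected_space_clopen_in by blast
  then show ?thesis using z0 z A_def by auto
qed


lemma circ_mono:
  assumes circ: "circulation X C" and W: "openin X W" and V: "openin X V" and sub: "W \<subseteq> V"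
    and c: "C W a b"
  shows "C V a b"
proof -
  have "\<forall>U\<in>{W, V}. openin X U" using W V by simp
  then have "smallest_preorder_containing (\<Union>{W, V}) (\<Union>U\<in>{W, V}. circ_rel C U) (circ_rel C (\<Union>{W, V}))"
    using circ unfolding circulation_def by blast
  moreover have "\<Union>{W, V} = V" using sub by blast
  ultimately have "circ_rel C W \<subseteq> circ_rel C V"
    unfolding smallest_preorder_containing_def by auto
  then show ?thesis using c unfolding circ_rel_def by blast
qed

lemma dipath_lift:
  assumes cov: "stream_covering E C B D \<rho>" and circE: "circulation E C"
    and gc: "continuous_map I01 E \<gamma>" and dp: "dipath B D \<delta>"
    and eq: "\<And>t. t \<in> {0..1} \<Longrightarrow> \<rho> (\<gamma> t) = \<delta> t"
  shows "dipath E C \<gamma>"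
  unfolding dipath_def stream_map_def
proof (intro conjI allI impI)
  show "continuous_map I01 E \<gamma>" by (rule gc)
  have rc: "continuous_map E B \<rho>" using cov unfolding stream_covering_def stream_map_def
    apply (elim conjE) by assumption
  fix V' x y assume V': "openin E V'" and c: "circ_I {z \<in> topspace I01. \<gamma> z \<in> V'} x y"
  have xle: "x \<le> y" and sub: "{x..y} \<subseteq> {z \<in> topspace I01. \<gamma> z \<in> V'}"
    using c unfolding circ_I_def by blast+
  have pre: "is_preorder_on V' (circ_rel C V')" using circE V' unfolding circulation_def by blast
  then have trV: "trans (circ_rel C V')" unfolding is_preorder_on_def by blast
  have dpc: "\<And>W a b. openin B W \<Longrightarrow> circ_I {z \<in> topspace I01. \<delta> z \<in> W} a b \<Longrightarrow> D W (\<delta> a) (\<delta> b)"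
    using dp unfolding dipath_def stream_map_def by blast
  show "C V' (\<gamma> x) (\<gamma> y)"
  proof (rule interval_lg[where R = "\<lambda>a b. C V' (\<gamma> a) (\<gamma> b)", OF xle])
    fix a b c assume "C V' (\<gamma> a) (\<gamma> b)" "C V' (\<gamma> b) (\<gamma> c)"
    then show "C V' (\<gamma> a) (\<gamma> c)" using trV unfolding circ_rel_def trans_def by blast
  next
    fix z assume z: "z \<in> {x..y}"
    then have z01: "z \<in> {0..1}" and zV: "\<gamma> z \<in> V'" using sub by auto
    have et: "\<gamma> z \<in> topspace E" using zV openin_subset[OF V'] by blast
    then have bt: "\<rho> (\<gamma> z) \<in> topspace B" using continuous_map_image_subset_topspace[OF rc] by blast
    obtain V where bV: "\<rho> (\<gamma> z) \<in> V" and ev: "evenly E C B D \<rho> V"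
      using cov_evenly[OF cov bt] by blast
    have oV: "openin B V" using ev unfolding evenly_def by (elim conjE)
    obtain U g where oU: "openin E U" and eU: "\<gamma> z \<in> U" and UV: "\<And>x. x \<in> U \<Longrightarrow> \<rho> x \<in> V"
      and gs: "stream_map (subtopology B V) D (subtopology E U) C g"
      and g1: "\<And>x. x \<in> U \<Longrightarrow> g (\<rho> x) = x" and g2: "\<And>y. y \<in> V \<Longrightarrow> \<rho> (g y) = y"
      using evenly_sheet[OF ev et bV] by blast
    define W where "W = U \<inter> V'"
    have oW: "openin E W" unfolding W_def using oU V' by blast
    have WV: "W \<subseteq> V'" unfolding W_def by blast
    have "openin I01 {t \<in> topspace I01. \<gamma> t \<in> W}"
      by (rule openin_continuous_map_preimage[OF gc oW])
    then have "openin (top_of_set {0..1}) {t \<in> {0..1}. \<gamma> t \<in> W}" by (simp add: I01_def)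
    moreover have "z \<in> {t \<in> {0..1}. \<gamma> t \<in> W}" using z01 zV eU by (simp add: W_def)
    ultimately obtain e where e0: "e > 0" and eb: "\<And>t. t \<in> {0..1} \<Longrightarrow> dist t z < e \<Longrightarrow> \<gamma> t \<in> W"
      unfolding openin_euclidean_subtopology_iff by blast
    have gcont: "continuous_map (subtopology B V) (subtopology E U) g"
      using gs unfolding stream_map_def by blast
    have oWU: "openin (subtopology E U) W"
      unfolding W_def using openin_subtopology_Int2[OF V', of U] by simp
    define WB where "WB = {q \<in> topspace (subtopology B V). g q \<in> W}"
    have "openin (subtopology B V) WB" unfolding WB_def
      by (rule openin_continuous_map_preimage[OF gcont oWU])
    then have oWB: "openin B WB" using oV openin_trans_full by blast
    have gsc: "\<And>p q. D WB p q \<Longrightarrow> C W (g p) (g q)"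
      using gs oWU unfolding stream_map_def WB_def by blast
    show "\<exists>e>0. \<forall>a b. x \<le> a \<and> a \<le> b \<and> b \<le> y \<and> z - e < a \<and> b < z + e \<longrightarrow> C V' (\<gamma> a) (\<gamma> b)"
    proof (intro exI conjI allI impI)
      show "e > 0" by (rule e0)
      fix a b assume ab: "x \<le> a \<and> a \<le> b \<and> b \<le> y \<and> z - e < a \<and> b < z + e"
      have inW: "\<gamma> t \<in> W" and t01: "t \<in> {0..1}" if "t \<in> {a..b}" for t
      proof -
        have "t \<in> {x..y}" using that ab by auto
        then show t01: "t \<in> {0..1}" using sub by auto
        have "dist t z < e" using that ab by (auto simp: dist_real_def)
        then show "\<gamma> t \<in> W" using eb t01 by blast
      qed
      have "{a..b} \<subseteq> {t \<in> topspace I01. \<delta> t \<in> WB}"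
      proof
        fix t assume t: "t \<in> {a..b}"
        have gW: "\<gamma> t \<in> W" using inW[OF t] .
        then have gU: "\<gamma> t \<in> U" by (simp add: W_def)
        have dt: "\<delta> t = \<rho> (\<gamma> t)" using eq t01[OF t] by simp
        have "\<rho> (\<gamma> t) \<in> V" using UV gU by blast
        moreover have "V \<subseteq> topspace B" using openin_subset[OF oV] .
        ultimately have "\<delta> t \<in> topspace (subtopology B V)" using dt by auto
        moreover have "g (\<delta> t) \<in> W" using dt g1[OF gU] gW by simp
        ultimately show "t \<in> {t \<in> topspace I01. \<delta> t \<in> WB}" using t01[OF t] by (simp add: WB_def)
      qed
      then have "circ_I {t \<in> topspace I01. \<delta> t \<in> WB} a b" using ab unfolding circ_I_def by blast
      then have "D WB (\<delta> a) (\<delta> b)" by (rule dpc[OF oWB])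
      then have "C W (g (\<delta> a)) (g (\<delta> b))" by (rule gsc)
      moreover have "a \<in> {a..b}" "b \<in> {a..b}" using ab by auto
      ultimately have "C W (\<gamma> a) (\<gamma> b)"
        using eq t01 inW g1 W_def by (metis IntD1)
      then show "C V' (\<gamma> a) (\<gamma> b)" using circ_mono[OF circE oW V' WV] by blast
    qed
  qed
qed


lemma cm_sub:
  assumes "continuous_map (top_of_set Q) X h" "S \<subseteq> Q"
  shows "continuous_map (top_of_set S) X h"
proof -
  have "top_of_set S = subtopology (top_of_set Q) S"
    using assms(2) by (simp add: subtopology_subtopology inf.absorb2)
  then show ?thesis using continuous_map_from_subtopology[OF assms(1)] by simp
qed

lemma conn_Icc: "connected_space (top_of_set {a..b::real})"
  by (rule connected_space_subtopology) simp

lemma cm_slice1: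
  assumes "continuous_map (top_of_set (A \<times> Y)) X k" "y \<in> Y"
  shows "continuous_map (top_of_set A) X (\<lambda>s. k (s, y))"
proof -
  have "continuous_map (top_of_set A) (top_of_set (A \<times> Y)) (\<lambda>s. (s, y))"
    using assms(2) by (auto intro!: continuous_intros)
  from continuous_map_compose[OF this assms(1)] show ?thesis by (simp add: o_def)
qed

lemma cm_slice2:
  assumes "continuous_map (top_of_set (A \<times> Y)) X k" "s \<in> A"
  shows "continuous_map (top_of_set Y) X (\<lambda>y. k (s, y))"
proof -
  have "continuous_map (top_of_set Y) (top_of_set (A \<times> Y)) (\<lambda>y. (s, y))"
    using assms(2) by (auto intro!: continuous_intros)
  from continuous_map_compose[OF this assms(1)] show ?thesis by (simp add: o_def)
qed

lemma paste_fst: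
  fixes a b c :: real
  assumes k1: "continuous_map (top_of_set ({a..b} \<times> Y)) X k1"
    and k2: "continuous_map (top_of_set ({b..c} \<times> Y)) X k2"
    and ag: "\<And>y. y \<in> Y \<Longrightarrow> k1 (b, y) = k2 (b, y)"
  shows "continuous_map (top_of_set ({a..c} \<times> Y)) X (\<lambda>w. if fst w \<le> b then k1 w else k2 w)"
proof (rule continuous_map_cases_le)
  show "continuous_map (top_of_set ({a..c} \<times> Y)) euclideanreal fst"
    by (simp add: continuous_on_fst continuous_on_id)
  show "continuous_map (top_of_set ({a..c} \<times> Y)) euclideanreal (\<lambda>x. b)" by simp
  have e1: "subtopology (top_of_set ({a..c} \<times> Y)) {x \<in> topspace (top_of_set ({a..c} \<times> Y)). fst x \<le> b}
        = top_of_set (({a..c} \<times> Y) \<inter> {x. fst x \<le> b})"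
    by (simp add: subtopology_subtopology set_eq_iff Int_def)
  have "continuous_map (top_of_set (({a..c} \<times> Y) \<inter> {x. fst x \<le> b})) X k1"
    by (rule cm_sub[OF k1]) auto
  then show "continuous_map (subtopology (top_of_set ({a..c} \<times> Y)) {x \<in> topspace (top_of_set ({a..c} \<times> Y)). fst x \<le> b}) X k1"
    using e1 by simp
  have e2: "subtopology (top_of_set ({a..c} \<times> Y)) {x \<in> topspace (top_of_set ({a..c} \<times> Y)). b \<le> fst x}
        = top_of_set (({a..c} \<times> Y) \<inter> {x. b \<le> fst x})"
    by (simp add: subtopology_subtopology set_eq_iff Int_def)
  have "continuous_map (top_of_set (({a..c} \<times> Y) \<inter> {x. b \<le> fst x})) X k2"
    by (rule cm_sub[OF k2]) auto
  then show "continuous_map (subtopology (top_of_set ({a..c} \<times> Y)) {x \<in> topspace (top_of_set ({a..c} \<times> Y)). b \<le> fst x}) X k2"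
    using e2 by simp
  fix x assume "x \<in> topspace (top_of_set ({a..c} \<times> Y))" "fst x = b"
  then show "k1 x = k2 x" using ag by (cases x) auto
qed

lemma paste_snd:
  fixes c d e :: real
  assumes k1: "continuous_map (top_of_set (A \<times> {c..d})) X k1"
    and k2: "continuous_map (top_of_set (A \<times> {d..e})) X k2"
    and ag: "\<And>s. s \<in> A \<Longrightarrow> k1 (s, d) = k2 (s, d)"
  shows "continuous_map (top_of_set (A \<times> {c..e})) X (\<lambda>w. if snd w \<le> d then k1 w else k2 w)"
proof (rule continuous_map_cases_le)
  show "continuous_map (top_of_set (A \<times> {c..e})) euclideanreal snd"
    by (simp add: continuous_on_snd continuous_on_id)
  show "continuous_map (top_of_set (A \<times> {c..e})) euclideanreal (\<lambda>x. d)" by simp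
  have e1: "subtopology (top_of_set (A \<times> {c..e})) {x \<in> topspace (top_of_set (A \<times> {c..e})). snd x \<le> d}
        = top_of_set ((A \<times> {c..e}) \<inter> {x. snd x \<le> d})"
    by (simp add: subtopology_subtopology set_eq_iff Int_def)
  have "continuous_map (top_of_set ((A \<times> {c..e}) \<inter> {x. snd x \<le> d})) X k1"
    by (rule cm_sub[OF k1]) auto
  then show "continuous_map (subtopology (top_of_set (A \<times> {c..e})) {x \<in> topspace (top_of_set (A \<times> {c..e})). snd x \<le> d}) X k1"
    using e1 by simp
  have e2: "subtopology (top_of_set (A \<times> {c..e})) {x \<in> topspace (top_of_set (A \<times> {c..e})). d \<le> snd x}
        = top_of_set ((A \<times> {c..e}) \<inter> {x. d \<le> snd x})"
    by (simp add: subtopology_subtopology set_eq_iff Int_def)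
  have "continuous_map (top_of_set ((A \<times> {c..e}) \<inter> {x. d \<le> snd x})) X k2"
    by (rule cm_sub[OF k2]) auto
  then show "continuous_map (subtopology (top_of_set (A \<times> {c..e})) {x \<in> topspace (top_of_set (A \<times> {c..e})). d \<le> snd x}) X k2"
    using e2 by simp
  fix x assume "x \<in> topspace (top_of_set (A \<times> {c..e}))" "snd x = d"
  then show "k1 x = k2 x" using ag by (cases x) auto
qed


lemma square_lift:
  fixes h :: "real \<times> real \<Rightarrow> 'b" and f :: "real \<Rightarrow> 'e"
  assumes cov: "stream_covering E C B D \<rho>"
    and hc: "continuous_map (top_of_set ({0..1} \<times> {0..1})) B h"
    and fc: "continuous_map (top_of_set {0..1}) E f"
    and hf: "\<And>y. y \<in> {0..1} \<Longrightarrow> \<rho> (f y) = h (0, y)"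
  shows "\<exists>k. continuous_map (top_of_set ({0..1} \<times> {0..1})) E k \<and> (\<forall>y\<in>{0..1}. k (0, y) = f y)
           \<and> (\<forall>z\<in>{0..1} \<times> {0..1}. \<rho> (k z) = h z)"
proof -
  define Q :: "(real \<times> real) set" where "Q = {0..1} \<times> {0..1}"
  have rc: "continuous_map E B \<rho>" using cov unfolding stream_covering_def stream_map_def
    apply (elim conjE) by assumption
  define \<C> where "\<C> = {Ob. open Ob \<and> (\<exists>V. evenly E C B D \<rho> V \<and> (\<forall>w\<in>Q \<inter> Ob. h w \<in> V))}"
  have cover: "Q \<subseteq> \<Union>\<C>"
  proof
    fix w assume w: "w \<in> Q"
    have "w \<in> topspace (top_of_set ({0..1} \<times> {0..1}))" using w by (simp add: Q_def)
    then have "h w \<in> topspace B" using continuous_map_image_subset_topspace[OF hc] by blast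
    then obtain V where hV: "h w \<in> V" and ev: "evenly E C B D \<rho> V" using cov_evenly[OF cov] by blast
    have oV: "openin B V" using ev unfolding evenly_def by (elim conjE)
    have "openin (top_of_set Q) {x \<in> topspace (top_of_set Q). h x \<in> V}"
      using openin_continuous_map_preimage[OF hc oV] by (simp add: Q_def)
    then have "openin (top_of_set Q) {x \<in> Q. h x \<in> V}" by simp
    then obtain T where T: "open T" "{x \<in> Q. h x \<in> V} = Q \<inter> T" unfolding openin_open by blast
    have "T \<in> \<C>" unfolding \<C>_def using T ev by blast
    moreover have "w \<in> T" using T w hV by blast
    ultimately show "w \<in> \<Union>\<C>" by blast
  qed
  have "(0,0) \<in> Q" by (simp add: Q_def)
  then have Cne: "\<C> \<noteq> {}" using cover by blast
  have cQ: "compact Q" by (simp add: Q_def compact_Times)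
  have oC: "\<And>Bx. Bx \<in> \<C> \<Longrightarrow> open Bx" by (simp add: \<C>_def)
  have "\<exists>\<delta>>0. \<forall>T. T \<subseteq> Q \<longrightarrow> diameter T < \<delta> \<longrightarrow> (\<exists>Bx\<in>\<C>. T \<subseteq> Bx)"
  proof (rule Lebesgue_number_lemma[OF cQ Cne cover oC])
    fix \<delta> :: real assume d: "0 < \<delta>" and H: "\<And>T. \<lbrakk>T \<subseteq> Q; diameter T < \<delta>\<rbrakk> \<Longrightarrow> \<exists>B\<in>\<C>. T \<subseteq> B"
    show "\<exists>\<delta>>0. \<forall>T. T \<subseteq> Q \<longrightarrow> diameter T < \<delta> \<longrightarrow> (\<exists>Bx\<in>\<C>. T \<subseteq> Bx)"
    proof (intro exI conjI allI impI)
      show "0 < \<delta>" by (rule d)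
      fix T assume "T \<subseteq> Q" "diameter T < \<delta>"
      then show "\<exists>Bx\<in>\<C>. T \<subseteq> Bx" by (rule H)
    qed
  qed
  then obtain \<delta> where d: "0 < \<delta> \<and> (\<forall>T. T \<subseteq> Q \<longrightarrow> diameter T < \<delta> \<longrightarrow> (\<exists>Bx\<in>\<C>. T \<subseteq> Bx))" ..
  then have d0: "0 < \<delta>" by (rule conjunct1)
  have L: "\<exists>V. evenly E C B D \<rho> V \<and> (\<forall>w\<in>T. h w \<in> V)" if T: "T \<subseteq> Q" "diameter T < \<delta>" for T
  proof -
    have "\<exists>Bx\<in>\<C>. T \<subseteq> Bx" using d T by (elim conjE allE impE)
    then obtain Ob where Ob: "Ob \<in> \<C>" "T \<subseteq> Ob" ..
    then obtain V where "evenly E C B D \<rho> V" "\<forall>w\<in>Q \<inter> Ob. h w \<in> V" unfolding \<C>_def by blast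
    moreover have "T \<subseteq> Q \<inter> Ob" using Ob T by blast
    ultimately show ?thesis by blast
  qed
  have strip: "\<exists>k. continuous_map (top_of_set ({a..b} \<times> {0..1})) E k \<and> (\<forall>y\<in>{0..1}. k (a, y) = f' y)
           \<and> (\<forall>w\<in>{a..b} \<times> {0..1}. \<rho> (k w) = h w)"
    if ab: "0 \<le> a" "a \<le> b" "b \<le> 1" "b - a < \<delta> / 8"
      and f'c: "continuous_map (top_of_set {0..1}) E f'" and hf': "\<And>y. y \<in> {0..1} \<Longrightarrow> \<rho> (f' y) = h (a, y)"
    for a b f'
  proof -
    define R' where "R' c d \<longleftrightarrow> (\<exists>k. continuous_map (top_of_set ({a..b} \<times> {c..d})) E k \<and> (\<forall>y\<in>{c..d}. k (a, y) = f' y)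
           \<and> (\<forall>w\<in>{a..b} \<times> {c..d}. \<rho> (k w) = h w))" for c d
    have "R' 0 1"
    proof (rule interval_lg[where R = R'])
      fix c d e :: real assume cde: "0 \<le> c" "c \<le> d" "d \<le> e" "e \<le> 1" and "R' c d" "R' d e"
      then obtain k1 k2 where k1: "continuous_map (top_of_set ({a..b} \<times> {c..d})) E k1" "\<forall>y\<in>{c..d}. k1 (a, y) = f' y"
           "\<forall>w\<in>{a..b} \<times> {c..d}. \<rho> (k1 w) = h w"
        and k2: "continuous_map (top_of_set ({a..b} \<times> {d..e})) E k2" "\<forall>y\<in>{d..e}. k2 (a, y) = f' y"
           "\<forall>w\<in>{a..b} \<times> {d..e}. \<rho> (k2 w) = h w"
        unfolding R'_def by blast
      have dcd: "d \<in> {c..d}" "d \<in> {d..e}" using cde by auto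
      have ag: "k1 (s, d) = k2 (s, d)" if s: "s \<in> {a..b}" for s
      proof -
        have c1: "continuous_map (top_of_set {a..b}) E (\<lambda>s. k1 (s, d))" by (rule cm_slice1[OF k1(1) dcd(1)])
        have c2: "continuous_map (top_of_set {a..b}) E (\<lambda>s. k2 (s, d))" by (rule cm_slice1[OF k2(1) dcd(2)])
        have eqr: "\<rho> (k1 (z, d)) = \<rho> (k2 (z, d))" if "z \<in> topspace (top_of_set {a..b})" for z
          using that k1(3) k2(3) dcd by auto
        have za: "a \<in> topspace (top_of_set {a..b})" using ab by simp
        have ag0: "k1 (a, d) = k2 (a, d)" using k1(2) k2(2) dcd by auto
        have zs: "s \<in> topspace (top_of_set {a..b})" using s by simp
        show ?thesis using lift_unique[OF cov c1 c2 eqr conn_Icc za ag0 zs] by simp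
      qed
      show "R' c e" unfolding R'_def
      proof (intro exI conjI ballI)
        show "continuous_map (top_of_set ({a..b} \<times> {c..e})) E (\<lambda>w. if snd w \<le> d then k1 w else k2 w)"
          by (rule paste_snd[OF k1(1) k2(1) ag])
        fix y assume "y \<in> {c..e}"
        then show "(if snd (a, y) \<le> d then k1 (a, y) else k2 (a, y)) = f' y"
          using k1(2) k2(2) by auto
      next
        fix w assume "w \<in> {a..b} \<times> {c..e}"
        then show "\<rho> (if snd w \<le> d then k1 w else k2 w) = h w"
          using k1(3) k2(3) by (cases w) auto
      qed
    next
      fix y0 :: real assume y0: "y0 \<in> {0..1}"
      define T0 where "T0 = {a..b} \<times> ({0..1} \<inter> {y0 - \<delta>/8 .. y0 + \<delta>/8})"
      have T0Q: "T0 \<subseteq> Q" using ab by (auto simp: T0_def Q_def)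
      have T0c: "T0 \<subseteq> cball (a, y0) (\<delta>/4)"
      proof
        fix w assume "w \<in> T0"
        then obtain s y where w: "w = (s, y)" "a \<le> s" "s \<le> b" "y0 - \<delta>/8 \<le> y" "y \<le> y0 + \<delta>/8"
          by (auto simp: T0_def)
        have "dist (a, y0) (s, y) = sqrt ((dist a s)\<^sup>2 + (dist y0 y)\<^sup>2)" by (rule dist_Pair_Pair)
        also have "\<dots> \<le> dist a s + dist y0 y" by (rule sqrt_sum_squares_le_sum) auto
        also have "\<dots> \<le> \<delta>/4"
        proof -
          have "\<bar>y0 - y\<bar> \<le> \<delta>/8" unfolding abs_le_iff using w by linarith
          moreover have "\<bar>a - s\<bar> \<le> \<delta>/8" unfolding abs_le_iff using w ab by linarith
          ultimately show ?thesis by (simp add: dist_real_def)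
        qed
        finally show "w \<in> cball (a, y0) (\<delta>/4)" using w by (simp add: dist_commute)
      qed
      have "diameter T0 \<le> diameter (cball (a, y0) (\<delta>/4))"
        by (rule diameter_subset[OF T0c]) simp
      also have "\<dots> < \<delta>" using d0 by simp
      finally obtain V where ev: "evenly E C B D \<rho> V" and hV: "\<forall>w\<in>T0. h w \<in> V"
        using L[OF T0Q] by blast
      have oV: "openin B V" using ev unfolding evenly_def by (elim conjE)
      have aT0: "(a, y0) \<in> T0" using ab y0 d0 by (simp add: T0_def)
      have ft: "f' y0 \<in> topspace E" using continuous_map_image_subset_topspace[OF f'c] y0 by auto
      have fV: "\<rho> (f' y0) \<in> V" using hf'[OF y0] hV aT0 by simp
      obtain U g where oU: "openin E U" and eU: "f' y0 \<in> U" and UV: "\<And>x. x \<in> U \<Longrightarrow> \<rho> x \<in> V"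
        and gs: "stream_map (subtopology B V) D (subtopology E U) C g"
        and g1: "\<And>x. x \<in> U \<Longrightarrow> g (\<rho> x) = x" and g2: "\<And>y. y \<in> V \<Longrightarrow> \<rho> (g y) = y"
        using evenly_sheet[OF ev ft fV] by blast
      have gcont: "continuous_map (subtopology B V) (subtopology E U) g"
        using gs unfolding stream_map_def by blast
      have "openin (top_of_set {0..1}) {x \<in> topspace (top_of_set {0..1}). f' x \<in> U}"
        by (rule openin_continuous_map_preimage[OF f'c oU])
      then have "openin (top_of_set {0..1}) {x \<in> {0..1}. f' x \<in> U}" by simp
      moreover have "y0 \<in> {x \<in> {0..1}. f' x \<in> U}" using y0 eU by simp
      ultimately obtain e1 where e10: "e1 > 0" and e1b: "\<And>y. y \<in> {0..1} \<Longrightarrow> dist y y0 < e1 \<Longrightarrow> f' y \<in> U"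
        unfolding openin_euclidean_subtopology_iff by blast
      show "\<exists>e>0. \<forall>c d. 0 \<le> c \<and> c \<le> d \<and> d \<le> 1 \<and> y0 - e < c \<and> d < y0 + e \<longrightarrow> R' c d"
      proof (intro exI conjI allI impI)
        show "min e1 (\<delta>/8) > 0" using e10 d0 by simp
        fix c d assume cd: "0 \<le> c \<and> c \<le> d \<and> d \<le> 1 \<and> y0 - min e1 (\<delta>/8) < c \<and> d < y0 + min e1 (\<delta>/8)"
        have sub: "{a..b} \<times> {c..d} \<subseteq> T0" using cd by (auto simp: T0_def)
        have subQ: "{a..b} \<times> {c..d} \<subseteq> Q" using sub T0Q by blast
        have hc': "continuous_map (top_of_set ({a..b} \<times> {c..d})) B h"
          by (rule cm_sub[OF hc]) (use subQ in \<open>simp add: Q_def\<close>)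
        have "continuous_map (top_of_set ({a..b} \<times> {c..d})) (subtopology B V) h"
          unfolding continuous_map_in_subtopology using hc' hV sub by auto
        then have "continuous_map (top_of_set ({a..b} \<times> {c..d})) (subtopology E U) (g \<circ> h)"
          using gcont by (rule continuous_map_compose)
        then have kc: "continuous_map (top_of_set ({a..b} \<times> {c..d})) E (g \<circ> h)"
          by (rule continuous_map_into_fulltopology)
        show "R' c d" unfolding R'_def
        proof (intro exI conjI ballI)
          show "continuous_map (top_of_set ({a..b} \<times> {c..d})) E (g \<circ> h)" by (rule kc)
          fix y assume y: "y \<in> {c..d}"
          then have y01: "y \<in> {0..1}" using cd by auto
          have "dist y y0 < e1" using y cd by (auto simp: dist_real_def)
          then have "f' y \<in> U" using e1b y01 by blast
          then have "g (\<rho> (f' y)) = f' y" by (rule g1)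
          then show "(g \<circ> h) (a, y) = f' y" using hf'[OF y01] by simp
        next
          fix w assume "w \<in> {a..b} \<times> {c..d}"
          then have "h w \<in> V" using sub hV by blast
          then show "\<rho> ((g \<circ> h) w) = h w" using g2 by simp
        qed
      qed
    qed simp
    then show ?thesis unfolding R'_def by simp
  qed
  define R where "R a b \<longleftrightarrow> (\<forall>f'. continuous_map (top_of_set {0..1}) E f' \<and> (\<forall>y\<in>{0..1}. \<rho> (f' y) = h (a, y))
      \<longrightarrow> (\<exists>k. continuous_map (top_of_set ({a..b} \<times> {0..1})) E k \<and> (\<forall>y\<in>{0..1}. k (a, y) = f' y)
           \<and> (\<forall>w\<in>{a..b} \<times> {0..1}. \<rho> (k w) = h w)))" for a b
  have "R 0 1"
  proof (rule interval_lg[where R = R])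
    fix a b c :: real assume abc: "0 \<le> a" "a \<le> b" "b \<le> c" "c \<le> 1" and Rab: "R a b" and Rbc: "R b c"
    show "R a c" unfolding R_def
    proof (intro allI impI)
      fix f' assume f': "continuous_map (top_of_set {0..1}) E f' \<and> (\<forall>y\<in>{0..1}. \<rho> (f' y) = h (a, y))"
      then obtain k1 where k1: "continuous_map (top_of_set ({a..b} \<times> {0..1})) E k1" "\<forall>y\<in>{0..1}. k1 (a, y) = f' y"
           "\<forall>w\<in>{a..b} \<times> {0..1}. \<rho> (k1 w) = h w"
        using Rab unfolding R_def by blast
      have bab: "b \<in> {a..b}" "b \<in> {b..c}" using abc by auto
      have "continuous_map (top_of_set {0..1}) E (\<lambda>y. k1 (b, y))" by (rule cm_slice2[OF k1(1) bab(1)])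
      moreover have "\<forall>y\<in>{0..1}. \<rho> (k1 (b, y)) = h (b, y)" using k1(3) bab by auto
      ultimately obtain k2 where k2: "continuous_map (top_of_set ({b..c} \<times> {0..1})) E k2" "\<forall>y\<in>{0..1}. k2 (b, y) = k1 (b, y)"
           "\<forall>w\<in>{b..c} \<times> {0..1}. \<rho> (k2 w) = h w"
        using Rbc unfolding R_def by blast
      show "\<exists>k. continuous_map (top_of_set ({a..c} \<times> {0..1})) E k \<and> (\<forall>y\<in>{0..1}. k (a, y) = f' y)
           \<and> (\<forall>w\<in>{a..c} \<times> {0..1}. \<rho> (k w) = h w)"
      proof (intro exI conjI ballI)
        show "continuous_map (top_of_set ({a..c} \<times> {0..1})) E (\<lambda>w. if fst w \<le> b then k1 w else k2 w)"
          by (rule paste_fst[OF k1(1) k2(1)]) (use k2(2) in auto)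
        fix y assume "y \<in> {0..1::real}"
        then show "(if fst (a, y) \<le> b then k1 (a, y) else k2 (a, y)) = f' y" using k1(2) abc by auto
      next
        fix w assume "w \<in> {a..c} \<times> {0..1::real}"
        then show "\<rho> (if fst w \<le> b then k1 w else k2 w) = h w"
          using k1(3) k2(3) by (cases w) auto
      qed
    qed
  next
    fix z :: real assume "z \<in> {0..1}"
    show "\<exists>e>0. \<forall>a b. 0 \<le> a \<and> a \<le> b \<and> b \<le> 1 \<and> z - e < a \<and> b < z + e \<longrightarrow> R a b"
    proof (intro exI conjI allI impI)
      show "\<delta>/16 > 0" using d0 by simp
      fix a b assume ab: "0 \<le> a \<and> a \<le> b \<and> b \<le> 1 \<and> z - \<delta>/16 < a \<and> b < z + \<delta>/16"
      then have "b - a < \<delta>/8" by simp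
      then show "R a b" unfolding R_def using strip ab by blast
    qed
  qed simp
  moreover have "continuous_map (top_of_set {0..1}) E f \<and> (\<forall>y\<in>{0..1}. \<rho> (f y) = h (0, y))"
    using fc hf by blast
  ultimately show ?thesis unfolding R_def by (elim allE impE) auto
qed


lemma sqI: "prod_topology (top_of_set {0..1::real}) I01 = top_of_set ({0..1} \<times> {0..1})"
  by (simp add: I01_def subtopology_Times[symmetric])

lemma dipath_cont: "dipath X C \<gamma> \<Longrightarrow> continuous_map I01 X \<gamma>"
  unfolding dipath_def stream_map_def by (elim conjE)

lemma dipath_in: "dipath X C \<gamma> \<Longrightarrow> t \<in> {0..1} \<Longrightarrow> \<gamma> t \<in> topspace X"
  using continuous_map_image_subset_topspace[OF dipath_cont] by fastforce

lemma dih_refl: "dipath X C \<gamma> \<Longrightarrow> \<gamma> 0 = x \<Longrightarrow> \<gamma> 1 = y \<Longrightarrow> dihomotopic X C x y \<gamma> \<gamma>"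
  unfolding dihomotopic_def by (simp add: dipath_cont)

lemma dih_sym: "dihomotopic X C x y \<gamma> \<delta> \<Longrightarrow> dihomotopic X C x y \<delta> \<gamma>"
  unfolding dihomotopic_def by (rule homotopic_with_symD)

lemma dih_trans: "dihomotopic X C x y \<gamma> \<delta> \<Longrightarrow> dihomotopic X C x y \<delta> \<epsilon> \<Longrightarrow> dihomotopic X C x y \<gamma> \<epsilon>"
  unfolding dihomotopic_def by (rule homotopic_with_trans)

lemma dih_props: "dihomotopic X C x y \<gamma> \<delta> \<Longrightarrow> dipath X C \<gamma> \<and> \<gamma> 0 = x \<and> \<gamma> 1 = y \<and> dipath X C \<delta> \<and> \<delta> 0 = x \<and> \<delta> 1 = y"
  unfolding dihomotopic_def by (drule homotopic_with_imp_property) simp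

lemma dih_eq:
  assumes "dipath X C \<gamma>" "\<gamma> 0 = x" "\<gamma> 1 = y" and eq: "\<And>t. t \<in> {0..1} \<Longrightarrow> \<gamma> t = \<delta> t"
  shows "dihomotopic X C x y \<gamma> \<delta>"
  unfolding dihomotopic_def
proof (rule homotopic_with_equal)
  have "dipath X C \<delta>" using dipath_cong[OF assms(1) eq] .
  moreover have "\<delta> 0 = x" "\<delta> 1 = y" using eq[of 0] eq[of 1] assms by auto
  ultimately show "dipath X C \<delta> \<and> \<delta> 0 = x \<and> \<delta> 1 = y" by simp
  show "dipath X C \<gamma> \<and> \<gamma> 0 = x \<and> \<gamma> 1 = y" using assms by simp
  show "continuous_map I01 X \<gamma>" using dipath_cont[OF assms(1)] .
  show "\<gamma> t = \<delta> t" if "t \<in> topspace I01" for t using that eq by simp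
qed

lemma class_eq:
  assumes "dihomotopic X C x y \<gamma>1 \<gamma>2"
  shows "{\<delta>. dihomotopic X C x y \<gamma>1 \<delta>} = {\<delta>. dihomotopic X C x y \<gamma>2 \<delta>}"
proof (rule set_eqI, rule iffI)
  fix \<delta> assume "\<delta> \<in> {\<delta>. dihomotopic X C x y \<gamma>1 \<delta>}"
  then have "dihomotopic X C x y \<gamma>1 \<delta>" by simp
  then have "dihomotopic X C x y \<gamma>2 \<delta>" by (rule dih_trans[OF dih_sym[OF assms]])
  then show "\<delta> \<in> {\<delta>. dihomotopic X C x y \<gamma>2 \<delta>}" by simp
next
  fix \<delta> assume "\<delta> \<in> {\<delta>. dihomotopic X C x y \<gamma>2 \<delta>}"
  then have "dihomotopic X C x y \<gamma>2 \<delta>" by simp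
  then have "dihomotopic X C x y \<gamma>1 \<delta>" by (rule dih_trans[OF assms])
  then show "\<delta> \<in> {\<delta>. dihomotopic X C x y \<gamma>1 \<delta>}" by simp
qed

lemma dih_map:
  assumes rs: "stream_map E C B D \<rho>" and h: "dihomotopic E C x y \<gamma> \<delta>"
  shows "dihomotopic B D (\<rho> x) (\<rho> y) (\<rho> \<circ> \<gamma>) (\<rho> \<circ> \<delta>)"
  unfolding dihomotopic_def
proof (rule homotopic_with_compose_continuous_map_left[OF h[unfolded dihomotopic_def]])
  show "continuous_map E B \<rho>" using rs unfolding stream_map_def by (elim conjE)
  fix j assume j: "dipath E C j \<and> j 0 = x \<and> j 1 = y"
  have "dipath B D (\<rho> \<circ> j)" using sm_compose[OF _ rs, of I01 circ_I j] j unfolding dipath_def by blast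
  then show "dipath B D (\<rho> \<circ> j) \<and> (\<rho> \<circ> j) 0 = \<rho> x \<and> (\<rho> \<circ> j) 1 = \<rho> y" using j by simp
qed

lemma dipath_compose:
  assumes rs: "stream_map E C B D \<rho>" and "dipath E C j"
  shows "dipath B D (\<rho> \<circ> j)"
  using sm_compose[OF _ rs, of I01 circ_I j] assms(2) unfolding dipath_def by blast

lemma T1_map_class:
  assumes rs: "stream_map E C B D \<rho>" and g: "dipath E C \<gamma>" "\<gamma> 0 = c" "\<gamma> 1 = c'"
  shows "T1_map B D \<rho> c c' {\<delta>. dihomotopic E C c c' \<gamma> \<delta>} = {\<delta>. dihomotopic B D (\<rho> c) (\<rho> c') (\<rho> \<circ> \<gamma>) \<delta>}"
proof (rule set_eqI, rule iffI)
  fix \<delta> assume "\<delta> \<in> T1_map B D \<rho> c c' {\<delta>. dihomotopic E C c c' \<gamma> \<delta>}"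
  then obtain \<gamma>' where a: "dihomotopic E C c c' \<gamma> \<gamma>'" and b: "dihomotopic B D (\<rho> c) (\<rho> c') (\<rho> \<circ> \<gamma>') \<delta>"
    unfolding T1_map_def by blast
  have "dihomotopic B D (\<rho> c) (\<rho> c') (\<rho> \<circ> \<gamma>) (\<rho> \<circ> \<gamma>')" by (rule dih_map[OF rs a])
  then show "\<delta> \<in> {\<delta>. dihomotopic B D (\<rho> c) (\<rho> c') (\<rho> \<circ> \<gamma>) \<delta>}" using dih_trans[OF _ b] by simp
next
  fix \<delta> assume "\<delta> \<in> {\<delta>. dihomotopic B D (\<rho> c) (\<rho> c') (\<rho> \<circ> \<gamma>) \<delta>}"
  moreover have "dihomotopic E C c c' \<gamma> \<gamma>" by (rule dih_refl[OF g])
  ultimately show "\<delta> \<in> T1_map B D \<rho> c c' {\<delta>. dihomotopic E C c c' \<gamma> \<delta>}"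
    unfolding T1_map_def by blast
qed


lemma phi_facts:
  fixes a :: real
  assumes a: "a = 0 \<or> a = 1"
  defines "\<phi> \<equiv> \<lambda>t::real. a + (1 - 2 * a) * t"
  shows "\<And>t. t \<in> {0..1} \<Longrightarrow> \<phi> t \<in> {0..1}" "\<And>t. \<phi> (\<phi> t) = t" "\<phi> a = 0" "\<phi> 0 = a"
    "continuous_on S \<phi>"
  using a unfolding \<phi>_def by (auto intro!: continuous_intros simp: algebra_simps)

lemma path_lift:
  assumes cov: "stream_covering E C B D \<rho>" and circE: "circulation E C"
    and dp: "dipath B D \<gamma>" and a: "a = 0 \<or> a = 1"
    and e: "e \<in> topspace E" "\<rho> e = \<gamma> a"
  shows "\<exists>\<gamma>'. dipath E C \<gamma>' \<and> \<gamma>' a = e \<and> (\<forall>t\<in>{0..1}. \<rho> (\<gamma>' t) = \<gamma> t)"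
proof -
  define \<phi> where "\<phi> = (\<lambda>t::real. a + (1 - 2 * a) * t)"
  have p01: "\<And>t. t \<in> {0..1} \<Longrightarrow> \<phi> t \<in> {0..1}" and pp: "\<And>t. \<phi> (\<phi> t) = t"
    and pa: "\<phi> a = 0" and p0: "\<phi> 0 = a" and pc: "\<And>S. continuous_on S \<phi>"
    using phi_facts[OF a] unfolding \<phi>_def by auto
  define Q :: "(real \<times> real) set" where "Q = {0..1} \<times> {0..1}"
  have gc: "continuous_map I01 B \<gamma>" by (rule dipath_cont[OF dp])
  have "continuous_map (top_of_set Q) I01 (\<lambda>w. \<phi> (fst w))"
    unfolding I01_def continuous_map_subtopology_eu
    using p01 by (auto simp: Q_def intro!: continuous_intros continuous_on_compose2[OF pc])
  then have hc: "continuous_map (top_of_set Q) B (\<lambda>w. \<gamma> (\<phi> (fst w)))"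
    using continuous_map_compose[OF _ gc] by (simp add: o_def)
  have fc: "continuous_map (top_of_set {0..1}) E (\<lambda>y. e)" using e by simp
  have hf: "\<And>y. y \<in> {0..1} \<Longrightarrow> \<rho> e = \<gamma> (\<phi> (fst (0::real, y)))" using e p0 by simp
  obtain k where kc: "continuous_map (top_of_set Q) E k" and k0: "\<forall>y\<in>{0..1}. k (0, y) = e"
    and kr: "\<forall>z\<in>Q. \<rho> (k z) = \<gamma> (\<phi> (fst z))"
    using square_lift[OF cov hc[unfolded Q_def] fc hf] unfolding Q_def by auto
  define \<gamma>' where "\<gamma>' = (\<lambda>t. k (\<phi> t, 0))"
  have "continuous_map I01 (top_of_set Q) (\<lambda>t. (\<phi> t, 0))"
    unfolding I01_def continuous_map_subtopology_eu
    using p01 by (auto simp: Q_def intro!: continuous_intros pc)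
  then have c': "continuous_map I01 E \<gamma>'"
    using continuous_map_compose[OF _ kc] by (simp add: o_def \<gamma>'_def)
  have r': "\<rho> (\<gamma>' t) = \<gamma> t" if "t \<in> {0..1}" for t
  proof -
    have "(\<phi> t, 0) \<in> Q" using p01[OF that] by (simp add: Q_def)
    then show ?thesis using kr pp by (simp add: \<gamma>'_def)
  qed
  have "dipath E C \<gamma>'" by (rule dipath_lift[OF cov circE c' dp r'])
  moreover have "\<gamma>' a = e" using k0 pa by (simp add: \<gamma>'_def)
  ultimately show ?thesis using r' by blast
qed


lemma homotopy_lift:
  assumes cov: "stream_covering E C B D \<rho>" and circE: "circulation E C"
    and a: "a = 0 \<or> a = 1"
    and d1: "dipath E C \<gamma>1" and d2: "dipath E C \<gamma>2" and ga: "\<gamma>1 a = \<gamma>2 a"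
    and H: "dihomotopic B D x y (\<rho> \<circ> \<gamma>1) (\<rho> \<circ> \<gamma>2)"
  shows "\<gamma>1 (1 - a) = \<gamma>2 (1 - a) \<and> dihomotopic E C (\<gamma>1 0) (\<gamma>1 1) \<gamma>1 \<gamma>2"
proof -
  define \<phi> where "\<phi> = (\<lambda>t::real. a + (1 - 2 * a) * t)"
  have p01: "\<And>t. t \<in> {0..1} \<Longrightarrow> \<phi> t \<in> {0..1}" and pp: "\<And>t. \<phi> (\<phi> t) = t"
    and pa: "\<phi> a = 0" and p0: "\<phi> 0 = a" and pc: "\<And>S. continuous_on S \<phi>"
    using phi_facts[OF a] unfolding \<phi>_def by auto
  define Q :: "(real \<times> real) set" where "Q = {0..1} \<times> {0..1}"
  define b where "b = 1 - a"
  have ab01: "a \<in> {0..1}" "b \<in> {0..1}" using a by (auto simp: b_def)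
  have ends: "(a = 0 \<and> b = 1) \<or> (a = 1 \<and> b = 0)" using a by (auto simp: b_def)
  obtain HH where Hc: "continuous_map (prod_topology (top_of_set {0..1::real}) I01) B HH"
    and H0: "\<forall>t. HH (0, t) = (\<rho> \<circ> \<gamma>1) t" and H1: "\<forall>t. HH (1, t) = (\<rho> \<circ> \<gamma>2) t"
    and HP: "\<forall>s\<in>{0..1::real}. dipath B D (\<lambda>t. HH (s, t)) \<and> HH (s, 0) = x \<and> HH (s, 1) = y"
    using H unfolding dihomotopic_def homotopic_with_def
    apply (elim exE conjE)
    apply (rule that)
    apply assumption+
    done
  have Hc': "continuous_map (top_of_set Q) B HH" using Hc by (simp add: sqI Q_def)
  have Hend: "HH (s, t) = HH (0, t)" if "s \<in> {0..1}" "t = a \<or> t = b" for s t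
    using HP that ends by fastforce
  have sw: "continuous_map (top_of_set Q) (top_of_set Q) (\<lambda>w. (snd w, \<phi> (fst w)))"
    unfolding continuous_map_subtopology_eu
    using p01 by (auto simp: Q_def intro!: continuous_intros continuous_on_compose2[OF pc])
  have hc: "continuous_map (top_of_set Q) B (\<lambda>w. HH (snd w, \<phi> (fst w)))"
    using continuous_map_compose[OF sw Hc'] by (simp add: o_def)
  have e0: "\<gamma>1 a \<in> topspace E" by (rule dipath_in[OF d1 ab01(1)])
  have fc: "continuous_map (top_of_set {0..1}) E (\<lambda>s. \<gamma>1 a)" using e0 by simp
  have hf: "\<rho> (\<gamma>1 a) = HH (snd (0::real, s), \<phi> (fst (0::real, s)))" if "s \<in> {0..1}" for s
    using Hend[OF that, of a] H0 p0 by simp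
  obtain k where kc: "continuous_map (top_of_set Q) E k" and k0: "\<forall>y\<in>{0..1}. k (0, y) = \<gamma>1 a"
    and kr: "\<forall>z\<in>Q. \<rho> (k z) = HH (snd z, \<phi> (fst z))"
    using square_lift[OF cov hc[unfolded Q_def] fc hf] unfolding Q_def by auto
  define K where "K = (\<lambda>s t. k (\<phi> t, s))"
  have Kc: "continuous_map I01 E (K s)" if s: "s \<in> {0..1}" for s
  proof -
    have "continuous_map I01 (top_of_set Q) (\<lambda>t. (\<phi> t, s))"
      unfolding I01_def continuous_map_subtopology_eu
      using p01 s by (auto simp: Q_def intro!: continuous_intros pc)
    then show ?thesis using continuous_map_compose[OF _ kc] by (simp add: o_def K_def)
  qed
  have Kr: "\<rho> (K s t) = HH (s, t)" if "s \<in> {0..1}" "t \<in> {0..1}" for s t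
  proof -
    have "(\<phi> t, s) \<in> Q" using p01 that by (simp add: Q_def)
    then show ?thesis using kr pp by (simp add: K_def)
  qed
  have Ka: "K s a = \<gamma>1 a" if "s \<in> {0..1}" for s using k0 pa that by (simp add: K_def)
  have conI: "connected_space I01" unfolding I01_def by (rule conn_Icc)
  have K0: "K 0 t = \<gamma>1 t" if t: "t \<in> {0..1}" for t
  proof -
    have eqr: "\<rho> (K 0 z) = \<rho> (\<gamma>1 z)" if "z \<in> topspace I01" for z
      using Kr[of 0 z] that H0 by simp
    show ?thesis
      using lift_unique[OF cov Kc[of 0] dipath_cont[OF d1] eqr conI _ _, of a t] ab01 Ka[of 0] t by simp
  qed
  have K1: "K 1 t = \<gamma>2 t" if t: "t \<in> {0..1}" for t
  proof -
    have eqr: "\<rho> (K 1 z) = \<rho> (\<gamma>2 z)" if "z \<in> topspace I01" for z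
      using Kr[of 1 z] that H1 by simp
    show ?thesis
      using lift_unique[OF cov Kc[of 1] dipath_cont[OF d2] eqr conI _ _, of a t] ab01 Ka[of 1] ga t by simp
  qed
  have Kb: "K s b = K 0 b" if s: "s \<in> {0..1}" for s
  proof -
    have c1: "continuous_map I01 E (\<lambda>s. K s b)"
    proof -
      have "continuous_map I01 (top_of_set Q) (\<lambda>s. (\<phi> b, s))"
        unfolding I01_def continuous_map_subtopology_eu
        using p01 ab01 by (auto simp: Q_def intro!: continuous_intros)
      then show ?thesis using continuous_map_compose[OF _ kc] by (simp add: o_def K_def)
    qed
    have "K 0 b \<in> topspace E" using K0[OF ab01(2)] dipath_in[OF d1 ab01(2)] by simp
    then have c2: "continuous_map I01 E (\<lambda>s. K 0 b)" by simp
    have eqr: "\<rho> (K z b) = \<rho> (K 0 b)" if "z \<in> topspace I01" for z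
      using Kr[of z b] Kr[of 0 b] that ab01 Hend[of z b] by simp
    show ?thesis
      using lift_unique[OF cov c1 c2 eqr conI _ _, of 0 s] s by simp
  qed
  have endb: "\<gamma>1 b = \<gamma>2 b" using K0[OF ab01(2)] K1[OF ab01(2)] Kb[of 1] by simp
  define P where "P = (\<lambda>j. dipath E C j \<and> j 0 = \<gamma>1 0 \<and> j 1 = \<gamma>1 1)"
  have hom: "homotopic_with P I01 E (K 0) (K 1)"
    unfolding homotopic_with_def
  proof (intro exI conjI allI ballI)
    have sw2: "continuous_map (top_of_set Q) (top_of_set Q) (\<lambda>w. (\<phi> (snd w), fst w))"
      unfolding continuous_map_subtopology_eu
      using p01 by (auto simp: Q_def intro!: continuous_intros continuous_on_compose2[OF pc])
    have "continuous_map (top_of_set Q) E (k \<circ> (\<lambda>w. (\<phi> (snd w), fst w)))"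
      by (rule continuous_map_compose[OF sw2 kc])
    then have "continuous_map (top_of_set Q) E (\<lambda>w. K (fst w) (snd w))"
      by (simp add: o_def K_def)
    then show "continuous_map (prod_topology (top_of_set {0..1}) I01) E (\<lambda>w. K (fst w) (snd w))"
      by (simp add: sqI Q_def)
    show "K (fst (0, t)) (snd (0, t)) = K 0 t" for t by simp
    show "K (fst (1, t)) (snd (1, t)) = K 1 t" for t by simp
    fix s :: real assume s: "s \<in> {0..1}"
    have "dipath E C (K s)"
      by (rule dipath_lift[OF cov circE Kc[OF s], of "\<lambda>t. HH (s, t)"]) (use HP s Kr[OF s] in auto)
    moreover have "K s a = \<gamma>1 a" "K s b = \<gamma>1 b" using Ka[OF s] Kb[OF s] K0[OF ab01(2)] by auto
    ultimately show "P (\<lambda>t. K (fst (s, t)) (snd (s, t)))"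
      unfolding P_def using ends by auto
  qed
  have P1: "P \<gamma>1" unfolding P_def using d1 by simp
  have P2: "P \<gamma>2" unfolding P_def using d2 ga endb ends by auto
  have "dihomotopic E C (\<gamma>1 0) (\<gamma>1 1) \<gamma>1 (K 0)"
    by (rule dih_eq[OF d1]) (use K0 in auto)
  moreover have "dihomotopic E C (\<gamma>1 0) (\<gamma>1 1) (K 0) (K 1)"
    using hom unfolding dihomotopic_def P_def .
  moreover have "dihomotopic E C (\<gamma>1 0) (\<gamma>1 1) (K 1) \<gamma>2"
    by (rule dih_sym, rule dih_eq[OF d2]) (use K1 P2 in \<open>auto simp: P_def\<close>)
  ultimately have "dihomotopic E C (\<gamma>1 0) (\<gamma>1 1) \<gamma>1 \<gamma>2"
    using dih_trans by metis
  then show ?thesis using endb b_def by simp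
qed


lemma fwd:
  assumes cov: "stream_covering E C B D \<rho>" and circE: "circulation E C"
  shows "op_fibration (topspace E) (T1_hom E C) (topspace B) (T1_hom B D) \<rho> (T1_map B D \<rho>)"
  unfolding op_fibration_def
proof (intro ballI)
  have rs: "stream_map E C B D \<rho>" using cov unfolding stream_covering_def by (elim conjE)
  fix c d g assume c: "c \<in> topspace E" and d: "d \<in> topspace B" and g: "g \<in> T1_hom B D (\<rho> c) d"
  then obtain \<gamma> where g_eq: "g = {\<delta>. dihomotopic B D (\<rho> c) d \<gamma> \<delta>}" and dg: "dipath B D \<gamma>"
    and g0: "\<gamma> 0 = \<rho> c" and g1: "\<gamma> 1 = d"
    unfolding T1_hom_def by blast
  obtain \<gamma>' where d': "dipath E C \<gamma>'" and g'0: "\<gamma>' 0 = c" and r': "\<forall>t\<in>{0..1}. \<rho> (\<gamma>' t) = \<gamma> t"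
    using path_lift[OF cov circE dg _ c, of 0] g0 by auto
  define c' where "c' = \<gamma>' 1"
  have c't: "c' \<in> topspace E" unfolding c'_def by (rule dipath_in[OF d']) simp
  have rc': "\<rho> c' = d" using r' g1 by (simp add: c'_def)
  have dr: "dipath B D (\<rho> \<circ> \<gamma>')" by (rule dipath_compose[OF rs d'])
  have hg: "dihomotopic B D (\<rho> c) d (\<rho> \<circ> \<gamma>') \<gamma>"
    by (rule dih_eq[OF dr]) (use g'0 rc' r' c'_def in auto)
  have cls: "T1_map B D \<rho> c c' {\<delta>. dihomotopic E C c c' \<gamma>' \<delta>} = g"
    using T1_map_class[OF rs d' g'0 c'_def[symmetric]] class_eq[OF hg] rc' g_eq by simp
  show "\<exists>!p. fst p \<in> topspace E \<and> snd p \<in> T1_hom E C c (fst p) \<and> \<rho> (fst p) = d \<and> T1_map B D \<rho> c (fst p) (snd p) = g"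
  proof (rule ex1I[where a = "(c', {\<delta>. dihomotopic E C c c' \<gamma>' \<delta>})"])
    have "{\<delta>. dihomotopic E C c c' \<gamma>' \<delta>} \<in> T1_hom E C c c'"
      unfolding T1_hom_def using d' g'0 c'_def by blast
    then show "fst (c', {\<delta>. dihomotopic E C c c' \<gamma>' \<delta>}) \<in> topspace E \<and>
      snd (c', {\<delta>. dihomotopic E C c c' \<gamma>' \<delta>}) \<in> T1_hom E C c (fst (c', {\<delta>. dihomotopic E C c c' \<gamma>' \<delta>})) \<and>
      \<rho> (fst (c', {\<delta>. dihomotopic E C c c' \<gamma>' \<delta>})) = d \<and>
      T1_map B D \<rho> c (fst (c', {\<delta>. dihomotopic E C c c' \<gamma>' \<delta>})) (snd (c', {\<delta>. dihomotopic E C c c' \<gamma>' \<delta>})) = g"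
      using c't rc' cls by simp
  next
    fix p assume p: "fst p \<in> topspace E \<and> snd p \<in> T1_hom E C c (fst p) \<and> \<rho> (fst p) = d \<and> T1_map B D \<rho> c (fst p) (snd p) = g"
    obtain c2 f2 where pe: "p = (c2, f2)" by (cases p)
    have f2: "f2 \<in> T1_hom E C c c2" and rc2: "\<rho> c2 = d" and m2: "T1_map B D \<rho> c c2 f2 = g"
      using p pe by auto
    then obtain \<gamma>2 where f2e: "f2 = {\<delta>. dihomotopic E C c c2 \<gamma>2 \<delta>}" and d2: "dipath E C \<gamma>2"
      and g20: "\<gamma>2 0 = c" and g21: "\<gamma>2 1 = c2"
      unfolding T1_hom_def by blast
    have "g = {\<delta>. dihomotopic B D (\<rho> c) (\<rho> c2) (\<rho> \<circ> \<gamma>2) \<delta>}"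
      using m2 T1_map_class[OF rs d2 g20 g21] f2e by simp
    moreover have "dihomotopic B D (\<rho> c) (\<rho> c2) (\<rho> \<circ> \<gamma>2) (\<rho> \<circ> \<gamma>2)"
      by (rule dih_refl[OF dipath_compose[OF rs d2]]) (use g20 g21 in auto)
    ultimately have "\<rho> \<circ> \<gamma>2 \<in> g" by simp
    then have "\<rho> \<circ> \<gamma>2 \<in> T1_map B D \<rho> c c' {\<delta>. dihomotopic E C c c' \<gamma>' \<delta>}" using cls by simp
    then have H: "dihomotopic B D (\<rho> c) (\<rho> c') (\<rho> \<circ> \<gamma>') (\<rho> \<circ> \<gamma>2)"
      using T1_map_class[OF rs d' g'0 c'_def[symmetric]] by simp
    have res: "\<gamma>' (1 - 0) = \<gamma>2 (1 - 0) \<and> dihomotopic E C (\<gamma>' 0) (\<gamma>' 1) \<gamma>' \<gamma>2"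
      by (rule homotopy_lift[OF cov circE _ d' d2 _ H]) (use g'0 g20 in auto)
    then have "c2 = c'" using g21 c'_def by simp
    moreover have "f2 = {\<delta>. dihomotopic E C c c' \<gamma>' \<delta>}"
    proof -
      have "dihomotopic E C (\<gamma>' 0) (\<gamma>' 1) \<gamma>' \<gamma>2" using res by (rule conjunct2)
      then have hh: "dihomotopic E C c c' \<gamma>' \<gamma>2" using g'0 c'_def by simp
      have "f2 = {\<delta>. dihomotopic E C c c' \<gamma>2 \<delta>}" using f2e \<open>c2 = c'\<close> by simp
      then show ?thesis using class_eq[OF hh] by simp
    qed
    ultimately show "p = (c', {\<delta>. dihomotopic E C c c' \<gamma>' \<delta>})" using pe by simp
  qed
qed

lemma bwd:
  assumes cov: "stream_covering E C B D \<rho>" and circE: "circulation E C"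
  shows "op_fibration (topspace E) (op_hom (T1_hom E C)) (topspace B) (op_hom (T1_hom B D))
           \<rho> (op_fmap (T1_map B D \<rho>))"
  unfolding op_fibration_def op_hom_def op_fmap_def
proof (intro ballI)
  have rs: "stream_map E C B D \<rho>" using cov unfolding stream_covering_def by (elim conjE)
  fix c d g assume c: "c \<in> topspace E" and d: "d \<in> topspace B" and g: "g \<in> T1_hom B D d (\<rho> c)"
  then obtain \<gamma> where g_eq: "g = {\<delta>. dihomotopic B D d (\<rho> c) \<gamma> \<delta>}" and dg: "dipath B D \<gamma>"
    and g0: "\<gamma> 0 = d" and g1: "\<gamma> 1 = \<rho> c"
    unfolding T1_hom_def by blast
  obtain \<gamma>' where d': "dipath E C \<gamma>'" and g'1: "\<gamma>' 1 = c" and r': "\<forall>t\<in>{0..1}. \<rho> (\<gamma>' t) = \<gamma> t"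
    using path_lift[OF cov circE dg _ c, of 1] g1 by auto
  define c' where "c' = \<gamma>' 0"
  have c't: "c' \<in> topspace E" unfolding c'_def by (rule dipath_in[OF d']) simp
  have rc': "\<rho> c' = d" using r' g0 by (simp add: c'_def)
  have dr: "dipath B D (\<rho> \<circ> \<gamma>')" by (rule dipath_compose[OF rs d'])
  have hg: "dihomotopic B D d (\<rho> c) (\<rho> \<circ> \<gamma>') \<gamma>"
    by (rule dih_eq[OF dr]) (use g'1 rc' r' c'_def in auto)
  have cls: "T1_map B D \<rho> c' c {\<delta>. dihomotopic E C c' c \<gamma>' \<delta>} = g"
    using T1_map_class[OF rs d' c'_def[symmetric] g'1] class_eq[OF hg] rc' g_eq by simp
  show "\<exists>!p. fst p \<in> topspace E \<and> snd p \<in> T1_hom E C (fst p) c \<and> \<rho> (fst p) = d \<and> T1_map B D \<rho> (fst p) c (snd p) = g"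
  proof (rule ex1I[where a = "(c', {\<delta>. dihomotopic E C c' c \<gamma>' \<delta>})"])
    have "{\<delta>. dihomotopic E C c' c \<gamma>' \<delta>} \<in> T1_hom E C c' c"
      unfolding T1_hom_def using d' g'1 c'_def by blast
    then show "fst (c', {\<delta>. dihomotopic E C c' c \<gamma>' \<delta>}) \<in> topspace E \<and>
      snd (c', {\<delta>. dihomotopic E C c' c \<gamma>' \<delta>}) \<in> T1_hom E C (fst (c', {\<delta>. dihomotopic E C c' c \<gamma>' \<delta>})) c \<and>
      \<rho> (fst (c', {\<delta>. dihomotopic E C c' c \<gamma>' \<delta>})) = d \<and>
      T1_map B D \<rho> (fst (c', {\<delta>. dihomotopic E C c' c \<gamma>' \<delta>})) c (snd (c', {\<delta>. dihomotopic E C c' c \<gamma>' \<delta>})) = g"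
      using c't rc' cls by simp
  next
    fix p assume p: "fst p \<in> topspace E \<and> snd p \<in> T1_hom E C (fst p) c \<and> \<rho> (fst p) = d \<and> T1_map B D \<rho> (fst p) c (snd p) = g"
    obtain c2 f2 where pe: "p = (c2, f2)" by (cases p)
    have f2: "f2 \<in> T1_hom E C c2 c" and rc2: "\<rho> c2 = d" and m2: "T1_map B D \<rho> c2 c f2 = g"
      using p pe by auto
    then obtain \<gamma>2 where f2e: "f2 = {\<delta>. dihomotopic E C c2 c \<gamma>2 \<delta>}" and d2: "dipath E C \<gamma>2"
      and g20: "\<gamma>2 0 = c2" and g21: "\<gamma>2 1 = c"
      unfolding T1_hom_def by blast
    have "g = {\<delta>. dihomotopic B D (\<rho> c2) (\<rho> c) (\<rho> \<circ> \<gamma>2) \<delta>}"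
      using m2 T1_map_class[OF rs d2 g20 g21] f2e by simp
    moreover have "dihomotopic B D (\<rho> c2) (\<rho> c) (\<rho> \<circ> \<gamma>2) (\<rho> \<circ> \<gamma>2)"
      by (rule dih_refl[OF dipath_compose[OF rs d2]]) (use g20 g21 in auto)
    ultimately have "\<rho> \<circ> \<gamma>2 \<in> g" by simp
    then have "\<rho> \<circ> \<gamma>2 \<in> T1_map B D \<rho> c' c {\<delta>. dihomotopic E C c' c \<gamma>' \<delta>}" using cls by simp
    then have H: "dihomotopic B D (\<rho> c') (\<rho> c) (\<rho> \<circ> \<gamma>') (\<rho> \<circ> \<gamma>2)"
      using T1_map_class[OF rs d' c'_def[symmetric] g'1] by simp
    have res: "\<gamma>' (1 - 1) = \<gamma>2 (1 - 1) \<and> dihomotopic E C (\<gamma>' 0) (\<gamma>' 1) \<gamma>' \<gamma>2"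
      by (rule homotopy_lift[OF cov circE _ d' d2 _ H]) (use g'1 g21 in auto)
    then have "c2 = c'" using g20 c'_def by simp
    moreover have "f2 = {\<delta>. dihomotopic E C c' c \<gamma>' \<delta>}"
    proof -
      have "dihomotopic E C (\<gamma>' 0) (\<gamma>' 1) \<gamma>' \<gamma>2" using res by (rule conjunct2)
      then have hh: "dihomotopic E C c' c \<gamma>' \<gamma>2" using g'1 c'_def by simp
      have "f2 = {\<delta>. dihomotopic E C c' c \<gamma>2 \<delta>}" using f2e \<open>c2 = c'\<close> by simp
      then show ?thesis using class_eq[OF hh] by simp
    qed
    ultimately show "p = (c', {\<delta>. dihomotopic E C c' c \<gamma>' \<delta>})" using pe by simp
  qed
qed

theorem mainTheorem11:
  fixes E :: "'e topology" and C :: "'e set \<Rightarrow> 'e \<Rightarrow> 'e \<Rightarrow> bool"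
    and B :: "'b topology" and D :: "'b set \<Rightarrow> 'b \<Rightarrow> 'b \<Rightarrow> bool"
    and \<rho> :: "'e \<Rightarrow> 'b"
  assumes "circulation E C" and "circulation B D"
    and "stream_covering E C B D \<rho>"
  shows "op_fibration (topspace E) (T1_hom E C) (topspace B) (T1_hom B D) \<rho> (T1_map B D \<rho>)
       \<and> op_fibration (topspace E) (op_hom (T1_hom E C)) (topspace B) (op_hom (T1_hom B D))
           \<rho> (op_fmap (T1_map B D \<rho>))"
  using fwd[OF assms(3) assms(1)] bwd[OF assms(3) assms(1)] by simp

end
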